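(* Let $P=\{S_1,\ldots,S_n\}$ be a homothetic packing of $n$ squares with contact graph $G=([n],E)$. If $\{i,j,k\}$ is a clique in $G$, then $S_i\cap S_j\cap S_k$ consists of exactly one point.
   Context: Let $S=\{(x,y): -1\le x,y\le 1\}$. A homothetic packing of $n$ squares is a set $P=\{S_1,\ldots,S_n\}$ with $S_i=r_iS+p_i$, $r_i>0$, $p_i\in\mathbb{R}^2$, such that distinct squares have disjoint interiors. Its contact graph is $G=([n],E)$ where $\{i,j\}\in E$ iff $i\neq j$ and $S_i\cap S_j\neq\emptyset$. *)

theory Defs
  imports "HOL-Analysis.Analysis"
begin

definition std_square :: "(real \<times> real) set" where
  "std_square = {(x, y). -1 \<le> x \<and> x \<le> 1 \<and> -1 \<le> y \<and> y \<le> 1}"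

definition hsquare :: "real \<Rightarrow> real \<times> real \<Rightarrow> (real \<times> real) set" where
  "hsquare r p = (\<lambda>q. r *\<^sub>R q + p) ` std_square"

definition homothetic_packing :: "nat \<Rightarrow> (nat \<Rightarrow> real) \<Rightarrow> (nat \<Rightarrow> real \<times> real) \<Rightarrow> bool" where
  "homothetic_packing n r p \<longleftrightarrow>
     (\<forall>i\<in>{1..n}. r i > 0) \<and>
     (\<forall>i\<in>{1..n}. \<forall>j\<in>{1..n}. i \<noteq> j \<longrightarrow>
        interior (hsquare (r i) (p i)) \<inter> interior (hsquare (r j) (p j)) = {})"

definition contact_edge :: "nat \<Rightarrow> (nat \<Rightarrow> real) \<Rightarrow> (nat \<Rightarrow> real \<times> real) \<Rightarrow> nat \<Rightarrow> nat \<Rightarrow> bool" where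
  "contact_edge n r p i j \<longleftrightarrow> i \<in> {1..n} \<and> j \<in> {1..n} \<and> i \<noteq> j \<and>
     hsquare (r i) (p i) \<inter> hsquare (r j) (p j) \<noteq> {}"

end

theory Submission
  imports Defs
begin

lemma hsq_eq:
  assumes "r > 0"
  shows "hsquare r c = {q. \<bar>fst q - fst c\<bar> \<le> r \<and> \<bar>snd q - snd c\<bar> \<le> r}"
proof
  show "hsquare r c \<subseteq> {q. \<bar>fst q - fst c\<bar> \<le> r \<and> \<bar>snd q - snd c\<bar> \<le> r}"
  proof
    fix q assume "q \<in> hsquare r c"
    then obtain x y where xy: "-1 \<le> x" "x \<le> 1" "-1 \<le> y" "y \<le> 1" and q: "q = r *\<^sub>R (x,y) + c"
      unfolding hsquare_def std_square_def by auto
    have "\<bar>r * x\<bar> \<le> r" "\<bar>r * y\<bar> \<le> r" using xy assms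
      by (auto simp: abs_mult abs_le_iff mult_le_cancel_left1)
    then show "q \<in> {q. \<bar>fst q - fst c\<bar> \<le> r \<and> \<bar>snd q - snd c\<bar> \<le> r}"
      using q by auto
  qed
next
  show "{q. \<bar>fst q - fst c\<bar> \<le> r \<and> \<bar>snd q - snd c\<bar> \<le> r} \<subseteq> hsquare r c"
  proof
    fix q assume h: "q \<in> {q. \<bar>fst q - fst c\<bar> \<le> r \<and> \<bar>snd q - snd c\<bar> \<le> r}"
    define x where "x = (fst q - fst c) / r"
    define y where "y = (snd q - snd c) / r"
    have "\<bar>x\<bar> \<le> 1" "\<bar>y\<bar> \<le> 1" using h assms
      by (auto simp: x_def y_def abs_divide divide_le_eq_1)
    hence "(x,y) \<in> std_square" unfolding std_square_def by auto
    moreover have "q = r *\<^sub>R (x,y) + c" using assms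
      by (simp add: x_def y_def prod_eq_iff)
    ultimately show "q \<in> hsquare r c" unfolding hsquare_def by blast
  qed
qed

lemma obox_interior:
  assumes "r > 0"
  shows "{q. \<bar>fst q - fst c\<bar> < r \<and> \<bar>snd q - snd c\<bar> < r} \<subseteq> interior (hsquare r c)"
proof (rule interior_maximal)
  show "{q. \<bar>fst q - fst c\<bar> < r \<and> \<bar>snd q - snd c\<bar> < r} \<subseteq> hsquare r c"
    using hsq_eq[OF assms] by auto
  have "open {q::real\<times>real. \<bar>fst q - fst c\<bar> < r}"
    by (intro open_Collect_less continuous_intros)
  moreover have "open {q::real\<times>real. \<bar>snd q - snd c\<bar> < r}"
    by (intro open_Collect_less continuous_intros)
  ultimately have "open ({q::real\<times>real. \<bar>fst q - fst c\<bar> < r} \<inter> {q. \<bar>snd q - snd c\<bar> < r})"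
    by (rule open_Int)
  then show "open {q::real\<times>real. \<bar>fst q - fst c\<bar> < r \<and> \<bar>snd q - snd c\<bar> < r}"
    by (simp add: Collect_conj_eq)
qed

lemma disj:
  assumes "homothetic_packing n r p" "i \<in> {1..n}" "j \<in> {1..n}" "i \<noteq> j"
    "\<bar>x - fst (p i)\<bar> < r i" "\<bar>y - snd (p i)\<bar> < r i"
    "\<bar>x - fst (p j)\<bar> < r j" "\<bar>y - snd (p j)\<bar> < r j"
  shows False
proof -
  have ri: "r i > 0" "r j > 0" using assms(1-3) unfolding homothetic_packing_def by auto
  have "(x,y) \<in> interior (hsquare (r i) (p i))" using obox_interior[OF ri(1), of "p i"] assms by auto
  moreover have "(x,y) \<in> interior (hsquare (r j) (p j))" using obox_interior[OF ri(2), of "p j"] assms by auto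
  ultimately show False using assms(1-4) unfolding homothetic_packing_def by blast
qed

lemma ival:
  fixes a b r s :: real
  assumes "\<bar>a - b\<bar> < r + s" "r > 0" "s > 0"
  shows "\<exists>y. \<bar>y - a\<bar> < r \<and> \<bar>y - b\<bar> < s"
  by (rule exI[of _ "(max (a - r) (b - s) + min (a + r) (b + s)) / 2"])
     (use assms in \<open>auto simp: abs_less_iff max_def min_def field_simps\<close>)

theorem lemma8:
  fixes n :: nat and r :: "nat \<Rightarrow> real" and p :: "nat \<Rightarrow> real \<times> real" and i j k :: nat
  assumes "homothetic_packing n r p"
    and "contact_edge n r p i j" and "contact_edge n r p j k" and "contact_edge n r p i k"
  shows "\<exists>!x. x \<in> hsquare (r i) (p i) \<inter> hsquare (r j) (p j) \<inter> hsquare (r k) (p k)"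
proof -
  have idx: "i \<in> {1..n}" "j \<in> {1..n}" "k \<in> {1..n}" "i \<noteq> j" "j \<noteq> k" "i \<noteq> k"
    using assms(2-4) unfolding contact_edge_def by auto
  have pos: "r i > 0" "r j > 0" "r k > 0" using assms(1) idx unfolding homothetic_packing_def by auto
  note H = hsq_eq[OF pos(1)] hsq_eq[OF pos(2)] hsq_eq[OF pos(3)]
  obtain qij where qij: "qij \<in> hsquare (r i) (p i)" "qij \<in> hsquare (r j) (p j)"
    using assms(2) unfolding contact_edge_def by blast
  obtain qjk where qjk: "qjk \<in> hsquare (r j) (p j)" "qjk \<in> hsquare (r k) (p k)"
    using assms(3) unfolding contact_edge_def by blast
  obtain qik where qik: "qik \<in> hsquare (r i) (p i)" "qik \<in> hsquare (r k) (p k)"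
    using assms(4) unfolding contact_edge_def by blast
  define ai where "ai = fst (p i)" define aj where "aj = fst (p j)" define ak where "ak = fst (p k)"
  define bi where "bi = snd (p i)" define bj where "bj = snd (p j)" define bk where "bk = snd (p k)"
  have ax: "\<bar>ai - aj\<bar> \<le> r i + r j" "\<bar>aj - ak\<bar> \<le> r j + r k" "\<bar>ai - ak\<bar> \<le> r i + r k"
    "\<bar>bi - bj\<bar> \<le> r i + r j" "\<bar>bj - bk\<bar> \<le> r j + r k" "\<bar>bi - bk\<bar> \<le> r i + r k"
    using qij qjk qik unfolding H ai_def aj_def ak_def bi_def bj_def bk_def by (auto simp: abs_le_iff)
  define x0 where "x0 = max (ai - r i) (max (aj - r j) (ak - r k))"
  define y0 where "y0 = max (bi - r i) (max (bj - r j) (bk - r k))"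
  have ex: "(x0, y0) \<in> hsquare (r i) (p i) \<inter> hsquare (r j) (p j) \<inter> hsquare (r k) (p k)"
    unfolding H using ax pos
    by (auto simp: x0_def y0_def ai_def aj_def ak_def bi_def bj_def bk_def abs_le_iff max_def)
  have sep: False if "\<bar>t - c\<bar> < r + s" "r > 0" "s > 0"
      "\<And>y. \<bar>y - c\<bar> < r \<Longrightarrow> \<bar>y - t\<bar> < s \<Longrightarrow> False" for t c r s :: real
    using ival[of c t r s] that by (auto simp: abs_minus_commute)
  have uniq: "u = v" if u: "u \<in> hsquare (r i) (p i) \<inter> hsquare (r j) (p j) \<inter> hsquare (r k) (p k)"
     and v: "v \<in> hsquare (r i) (p i) \<inter> hsquare (r j) (p j) \<inter> hsquare (r k) (p k)" for u v
  proof (rule ccontr)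
    assume "u \<noteq> v"
    hence "fst u \<noteq> fst v \<or> snd u \<noteq> snd v" by (auto simp: prod_eq_iff)
    then show False
    proof
      assume ne: "fst u \<noteq> fst v"
      define xm where "xm = (fst u + fst v) / 2"
      have xm: "\<bar>xm - ai\<bar> < r i" "\<bar>xm - aj\<bar> < r j" "\<bar>xm - ak\<bar> < r k"
        using u v ne unfolding H xm_def ai_def aj_def ak_def by (auto simp: abs_le_iff abs_less_iff field_simps neq_iff)
      have "\<bar>bi - bj\<bar> \<ge> r i + r j"
        using sep[of bi bj "r j" "r i"] disj[OF assms(1) idx(1,2,4), of xm] xm pos
        unfolding ai_def aj_def bi_def bj_def by (force simp: abs_minus_commute)
      moreover have "\<bar>bj - bk\<bar> \<ge> r j + r k"
        using sep[of bj bk "r k" "r j"] disj[OF assms(1) idx(2,3,5), of xm] xm pos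
        unfolding ak_def aj_def bk_def bj_def by (force simp: abs_minus_commute)
      moreover have "\<bar>bi - bk\<bar> \<ge> r i + r k"
        using sep[of bi bk "r k" "r i"] disj[OF assms(1) idx(1,3,6), of xm] xm pos
        unfolding ai_def ak_def bi_def bk_def by (force simp: abs_minus_commute)
      moreover have "\<bar>snd u - bi\<bar> \<le> r i" "\<bar>snd u - bj\<bar> \<le> r j" "\<bar>snd u - bk\<bar> \<le> r k"
        using u unfolding H bi_def bj_def bk_def by auto
      ultimately show False using pos by (auto simp: abs_le_iff)
    next
      assume ne: "snd u \<noteq> snd v"
      define ym where "ym = (snd u + snd v) / 2"
      have ym: "\<bar>ym - bi\<bar> < r i" "\<bar>ym - bj\<bar> < r j" "\<bar>ym - bk\<bar> < r k"
        using u v ne unfolding H ym_def bi_def bj_def bk_def by (auto simp: abs_le_iff abs_less_iff field_simps neq_iff)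
      have "\<bar>ai - aj\<bar> \<ge> r i + r j"
        using sep[of ai aj "r j" "r i"] disj[OF assms(1) idx(1,2,4), of _ ym] ym pos
        unfolding ai_def aj_def bi_def bj_def by (force simp: abs_minus_commute)
      moreover have "\<bar>aj - ak\<bar> \<ge> r j + r k"
        using sep[of aj ak "r k" "r j"] disj[OF assms(1) idx(2,3,5), of _ ym] ym pos
        unfolding ak_def aj_def bk_def bj_def by (force simp: abs_minus_commute)
      moreover have "\<bar>ai - ak\<bar> \<ge> r i + r k"
        using sep[of ai ak "r k" "r i"] disj[OF assms(1) idx(1,3,6), of _ ym] ym pos
        unfolding ai_def ak_def bi_def bk_def by (force simp: abs_minus_commute)
      moreover have "\<bar>fst u - ai\<bar> \<le> r i" "\<bar>fst u - aj\<bar> \<le> r j" "\<bar>fst u - ak\<bar> \<le> r k"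
        using u unfolding H ai_def aj_def ak_def by auto
      ultimately show False using pos by (auto simp: abs_le_iff)
    qed
  qed
  show ?thesis using ex uniq by blast
qed

end
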